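(* For integers $n\geqslant 1$ and $m\geqslant 0$ let $\delta_{n,m}$ be the number of M-partitions $\lambda$ of type $(n,n,m)$ with $\lambda_{=2}=\{\mathbf e_1+\mathbf e_i: i=1,\dots,n\}\subset\mathbb N^n$ (with $\delta_{n,0}=0$). Then $\Phi_n(t)=\sum_{m\geqslant 0}\delta_{n,m}t^m$ satisfies \[ \Phi_1(t)=\sum_{i\geqslant 1}t^i,\qquad \Phi_n(t)=\sum_{i\geqslant 1}t^{\,i+n-2}\Big(\frac{1-t^i}{1-t}\Big)^{n-1}\quad(n\geqslant 2). \]
   Context: Let $\mathbb N=\mathbb Z_{\geqslant 0}$ with the componentwise order and $\mathbf e_i$ the standard basis vectors. $\mathrm P^n_d$ is the set of subsets $\lambda\subset\mathbb N^n$ of size $d$ closed downward. The degree of a point is the sum of its coordinates; $\lambda_{=i}$, $\lambda_{\geqslant i}$ are the elements of degree $i$, resp. $\geqslant i$; $h_\lambda(i)=|\lambda_{=i}|$; $\mathrm{Soc}(\lambda)$ is the set of maximal elements. For positive integers $k,q,m$, an M-partition of type $(k,q,m)$ is $\lambda\in\mathrm P^k_{1+k+q+m}$ with $\mathrm{Soc}(\lambda)\subset\lambda_{\geqslant3}$, $h_\lambda(1)=k$, $h_\lambda(2)=q$, $\sum_{i\geqslant3}h_\lambda(i)=m$. *)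

theory Defs
  imports Main "HOL-Computational_Algebra.Formal_Power_Series"
begin

text \<open>Points of N^n are modelled as functions nat => nat vanishing outside {0..<n}
  (coordinate i of the paper is index i-1 here). The order on nat => nat is the
  pointwise (componentwise) order.\<close>

definition pts :: "nat \<Rightarrow> (nat \<Rightarrow> nat) set" where
  "pts n = {x. \<forall>j\<ge>n. x j = 0}"

definition deg :: "nat \<Rightarrow> (nat \<Rightarrow> nat) \<Rightarrow> nat" where
  "deg n x = (\<Sum>j<n. x j)"

definition ebasis :: "nat \<Rightarrow> nat \<Rightarrow> nat" where
  "ebasis i = (\<lambda>j. if j = i then 1 else 0)"

definition Pset :: "nat \<Rightarrow> nat \<Rightarrow> (nat \<Rightarrow> nat) set set" where
  "Pset n d = {lam. lam \<subseteq> pts n \<and> finite lam \<and> card lam = d \<and>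
      (\<forall>x\<in>lam. \<forall>y\<in>pts n. y \<le> x \<longrightarrow> y \<in> lam)}"

definition layer :: "nat \<Rightarrow> (nat \<Rightarrow> nat) set \<Rightarrow> nat \<Rightarrow> (nat \<Rightarrow> nat) set" where
  "layer n lam i = {x\<in>lam. deg n x = i}"

definition layer_ge :: "nat \<Rightarrow> (nat \<Rightarrow> nat) set \<Rightarrow> nat \<Rightarrow> (nat \<Rightarrow> nat) set" where
  "layer_ge n lam i = {x\<in>lam. deg n x \<ge> i}"

definition hfun :: "nat \<Rightarrow> (nat \<Rightarrow> nat) set \<Rightarrow> nat \<Rightarrow> nat" where
  "hfun n lam i = card (layer n lam i)"

definition Soc :: "(nat \<Rightarrow> nat) set \<Rightarrow> (nat \<Rightarrow> nat) set" where
  "Soc lam = {x\<in>lam. \<forall>y\<in>lam. x \<le> y \<longrightarrow> y = x}"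

text \<open>M-partition of type (k,q,m); sum of h(i) over i>=3 is the number of elements
  of degree >= 3.\<close>
definition M_partition :: "nat \<Rightarrow> nat \<Rightarrow> nat \<Rightarrow> (nat \<Rightarrow> nat) set \<Rightarrow> bool" where
  "M_partition k q m lam \<longleftrightarrow> 0 < k \<and> 0 < q \<and> 0 < m \<and>
     lam \<in> Pset k (1 + k + q + m) \<and> Soc lam \<subseteq> layer_ge k lam 3 \<and>
     hfun k lam 1 = k \<and> hfun k lam 2 = q \<and> card (layer_ge k lam 3) = m"

definition delta :: "nat \<Rightarrow> nat \<Rightarrow> nat" where
  "delta n m = card {lam. M_partition n n m lam \<and>
      layer n lam 2 = {(\<lambda>j. ebasis 0 j + ebasis i j) | i. i < n}}"

definition Phi :: "nat \<Rightarrow> rat fps" where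
  "Phi n = Abs_fps (\<lambda>m. of_nat (delta n m))"

end

theory Submission
  imports Defs "HOL-Library.FuncSet"
begin

definition Q :: "nat \<Rightarrow> nat \<Rightarrow> nat" where "Q a = (\<lambda>j. if j = 0 then a else 0)"
definition R :: "nat \<Rightarrow> nat \<Rightarrow> nat \<Rightarrow> nat" where
  "R a i = (\<lambda>j. if j = 0 then a else if j = i then 1 else 0)"

fun enc :: "nat + nat \<times> nat \<Rightarrow> nat \<Rightarrow> nat" where
  "enc (Inl a) = Q a" | "enc (Inr (i, a)) = R a i"

definition JJ :: "nat \<Rightarrow> nat \<Rightarrow> (nat \<Rightarrow> nat) \<Rightarrow> (nat + nat \<times> nat) set" where
  "JJ n p c = {..p} <+> (SIGMA i:{1..<n}. {..c i})"

definition lamPC where "lamPC n p c = enc ` JJ n p c"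

lemma Q_R_neq: "i \<ge> 1 \<Longrightarrow> Q a \<noteq> R b i"
proof
  assume i: "i \<ge> 1" and e: "Q a = R b i"
  have "Q a i = R b i i" using e by metis
  thus False using i unfolding Q_def R_def by simp
qed

lemma Q_R_neq': "i \<ge> 1 \<Longrightarrow> R b i \<noteq> Q a"
  using Q_R_neq by metis

lemma Q_inj: "Q a = Q b \<longleftrightarrow> a = b"
  by (metis Q_def)

lemma R_0[simp]: "R a i 0 = a" by (simp add: R_def)
lemma R_nz: "j \<noteq> 0 \<Longrightarrow> R a i j = (if j = i then 1 else 0)" by (simp add: R_def)
lemma Q_0[simp]: "Q a 0 = a" by (simp add: Q_def)
lemma Q_nz: "j \<noteq> 0 \<Longrightarrow> Q a j = 0" by (simp add: Q_def)

lemma R_inj: "i \<ge> 1 \<Longrightarrow> k \<ge> 1 \<Longrightarrow> R a i = R b k \<longleftrightarrow> a = b \<and> i = k"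
proof
  assume i: "i \<ge> 1" "k \<ge> 1" and e: "R a i = R b k"
  have h0: "R a i 0 = R b k 0" and hi: "R a i i = R b k i" using e by metis+
  have h1: "R a i i = 1" using i by (simp add: R_def)
  have h2: "R b k i = (if i = k then 1 else 0)" using i by (simp add: R_def)
  have "i = k" using hi h1 h2 by (cases "i = k") auto
  moreover have "a = b" using h0 by simp
  ultimately show "a = b \<and> i = k" by simp
qed auto

lemma enc_inj: "inj_on enc (JJ n p c)"
  unfolding JJ_def inj_on_def
  apply (auto simp: Q_inj R_inj)
  using Q_R_neq Q_R_neq' by auto

lemma finite_JJ: "finite (JJ n p c)"
  unfolding JJ_def by auto

lemma deg_Q: "n \<ge> 1 \<Longrightarrow> deg n (Q a) = a"
  unfolding deg_def Q_def by (simp add: sum.If_cases lessThan_def)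


lemma Q_alt: "Q a = (\<lambda>j. if j = 0 then a else 0)" by (simp add: Q_def)

lemma R_alt: "1 \<le> i \<Longrightarrow> R a i = (\<lambda>j. (if j = 0 then a else 0) + (if j = i then 1 else 0))"
  unfolding R_def by auto

lemma deg_R: "1 \<le> i \<Longrightarrow> i < n \<Longrightarrow> deg n (R a i) = a + 1"
  unfolding deg_def by (simp add: R_alt sum.distrib)

lemma Q_pts: "n \<ge> 1 \<Longrightarrow> Q a \<in> pts n"
  unfolding pts_def Q_def by auto

lemma R_pts: "i < n \<Longrightarrow> R a i \<in> pts n"
  unfolding pts_def R_def by auto

lemma mem_lamPC: "x \<in> lamPC n p c \<longleftrightarrow>
   (\<exists>a\<le>p. x = Q a) \<or> (\<exists>i a. 1 \<le> i \<and> i < n \<and> a \<le> c i \<and> x = R a i)"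
  unfolding lamPC_def JJ_def by force

lemma mem_Q: "Q a \<in> lamPC n p c \<longleftrightarrow> a \<le> p"
  unfolding mem_lamPC by (auto simp: Q_inj Q_R_neq)

lemma mem_R: "1 \<le> i \<Longrightarrow> R a i \<in> lamPC n p c \<longleftrightarrow> i < n \<and> a \<le> c i"
  unfolding mem_lamPC by (auto simp: R_inj Q_R_neq')

lemma Q_le_Q: "Q a \<le> Q b \<longleftrightarrow> a \<le> b"
  unfolding le_fun_def Q_def by auto

lemma Q_le_R: "Q a \<le> R a i"
  unfolding le_fun_def Q_def R_def by auto

lemma R_le_R: "a \<le> b \<Longrightarrow> R a i \<le> R b i"
  unfolding le_fun_def R_def by auto

lemma R_le_Q: "1 \<le> i \<Longrightarrow> \<not> R a i \<le> Q b"
proof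
  assume i: "1 \<le> i" and h: "R a i \<le> Q b"
  have "R a i i \<le> Q b i" using h unfolding le_fun_def by blast
  moreover have "R a i i = 1" using i by (simp add: R_def)
  moreover have "Q b i = 0" using i by (simp add: Q_def)
  ultimately show False by simp
qed

lemma R_le_R': "1 \<le> i \<Longrightarrow> 1 \<le> k \<Longrightarrow> R a i \<le> R b k \<Longrightarrow> i = k \<and> a \<le> b"
proof -
  assume i: "1 \<le> i" "1 \<le> k" and h: "R a i \<le> R b k"
  have hi: "R a i i \<le> R b k i" and h0: "R a i 0 \<le> R b k 0" using h unfolding le_fun_def by blast+
  have h1: "R a i i = 1" using i by (simp add: R_def)
  have h2: "R b k i = (if i = k then 1 else 0)" using i by (simp add: R_def)
  have "i = k" using hi h1 h2 by (cases "i = k") auto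
  moreover have "a \<le> b" using h0 by simp
  ultimately show ?thesis by simp
qed

lemma Q_le_R': "Q a \<le> R b k \<Longrightarrow> a \<le> b"
proof -
  assume h: "Q a \<le> R b k"
  have "Q a 0 \<le> R b k 0" using h unfolding le_fun_def by blast
  thus ?thesis by simp
qed

lemma le_Q: "y \<le> Q a \<Longrightarrow> \<exists>b\<le>a. y = Q b"
proof -
  assume h: "y \<le> Q a"
  have "y = Q (y 0)" using h unfolding le_fun_def Q_def
    by (intro ext) (metis le_zero_eq)
  moreover have "y 0 \<le> a" using h unfolding le_fun_def Q_def by (metis)
  ultimately show ?thesis by blast
qed

lemma le_R: "1 \<le> i \<Longrightarrow> y \<le> R a i \<Longrightarrow> (\<exists>b\<le>a. y = Q b) \<or> (\<exists>b\<le>a. y = R b i)"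
proof -
  assume i: "1 \<le> i" and h: "y \<le> R a i"
  have y0: "y 0 \<le> a" using h unfolding le_fun_def R_def by (metis)
  have yi: "y i \<le> 1" using h i unfolding le_fun_def R_def by (metis not_one_le_zero)
  have yo: "\<And>j. j \<noteq> 0 \<Longrightarrow> j \<noteq> i \<Longrightarrow> y j = 0" using h unfolding le_fun_def R_def
    by (metis le_zero_eq)
  show ?thesis
  proof (cases "y i = 0")
    case True
    have "y = Q (y 0)" unfolding Q_def using yo True by (intro ext) auto
    thus ?thesis using y0 by blast
  next
    case False
    have "y = R (y 0) i" unfolding R_def using yo False yi by (intro ext) auto
    thus ?thesis using y0 by blast
  qed
qed

fun dg :: "nat + nat \<times> nat \<Rightarrow> nat" where
  "dg (Inl a) = a" | "dg (Inr (i, a)) = a + 1"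

lemma deg_enc: "n \<ge> 1 \<Longrightarrow> x \<in> JJ n p c \<Longrightarrow> deg n (enc x) = dg x"
  unfolding JJ_def by (auto simp: deg_Q deg_R)

lemma layer_ge_lamPC: "n \<ge> 1 \<Longrightarrow> layer_ge n (lamPC n p c) d = enc ` {x \<in> JJ n p c. dg x \<ge> d}"
  unfolding layer_ge_def lamPC_def using deg_enc by fastforce

lemma layer3_idx: "{x \<in> JJ n p c. dg x \<ge> 3} = {3..p} <+> (SIGMA i:{1..<n}. {2..c i})"
  unfolding JJ_def by (auto elim!: PlusE)

lemma card_layer3: "n \<ge> 1 \<Longrightarrow> card (layer_ge n (lamPC n p c) 3) = (p - 2) + (\<Sum>i\<in>{1..<n}. c i - 1)"
proof -
  assume n: "n \<ge> 1"
  have "card (layer_ge n (lamPC n p c) 3) = card ({3..p} <+> (SIGMA i:{1..<n}. {2..c i}))"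
    unfolding layer_ge_lamPC[OF n] layer3_idx[symmetric]
    by (rule card_image) (rule inj_on_subset[OF enc_inj], auto)
  also have "\<dots> = (p - 2) + (\<Sum>i\<in>{1..<n}. c i - 1)"
    by (simp add: card_Plus card_SigmaI)
  finally show ?thesis .
qed

lemma card_lamPC: "card (lamPC n p c) = (p + 1) + (\<Sum>i\<in>{1..<n}. c i + 1)"
proof -
  have "card (lamPC n p c) = card (JJ n p c)"
    unfolding lamPC_def by (rule card_image[OF enc_inj])
  also have "\<dots> = (p + 1) + (\<Sum>i\<in>{1..<n}. c i + 1)"
    unfolding JJ_def by (simp add: card_Plus card_SigmaI)
  finally show ?thesis .
qed


definition L2 :: "nat \<Rightarrow> (nat \<Rightarrow> nat) set" where
  "L2 n = {(\<lambda>j. ebasis 0 j + ebasis i j) | i. i < n}"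

definition V :: "nat \<Rightarrow> nat \<Rightarrow> (nat \<times> (nat \<Rightarrow> nat)) set" where
  "V n m = {(p, c). 2 \<le> p \<and> c \<in> PiE {1..<n} (\<lambda>_. {2..p}) \<and>
      (3 \<le> p \<or> (\<exists>k\<in>{1..<n}. c k = p)) \<and> m = p - 2 + (\<Sum>k\<in>{1..<n}. c k - 1)}"

lemma ebsum: "(\<lambda>j. ebasis 0 j + ebasis i j) = (if i = 0 then Q 2 else R 1 i)"
  unfolding ebasis_def Q_def R_def by (intro ext) auto

lemma L2_alt: "n \<ge> 1 \<Longrightarrow> L2 n = insert (Q 2) ((\<lambda>i. R 1 i) ` {1..<n})"
proof -
  assume n: "n \<ge> 1"
  have "L2 n = (\<lambda>i. if i = 0 then Q 2 else R 1 i) ` {..<n}"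
    unfolding L2_def ebsum by blast
  also have "{..<n} = insert 0 {1..<n}" using n by auto
  also have "(\<lambda>i. if i = 0 then Q 2 else R 1 i) ` insert 0 {1..<n} = insert (Q 2) ((\<lambda>i. R 1 i) ` {1..<n})"
    by (auto simp: image_def)
  finally show ?thesis .
qed

lemma layer_lamPC: "n \<ge> 1 \<Longrightarrow> x \<in> layer n (lamPC n p c) d \<longleftrightarrow>
   (\<exists>a\<le>p. x = Q a \<and> a = d) \<or> (\<exists>i a. 1 \<le> i \<and> i < n \<and> a \<le> c i \<and> x = R a i \<and> a + 1 = d)"
  unfolding layer_def mem_lamPC by (auto simp: deg_Q deg_R)

lemma layer1: "n \<ge> 1 \<Longrightarrow> p \<ge> 1 \<Longrightarrow> layer n (lamPC n p c) 1 = insert (Q 1) ((\<lambda>i. R 0 i) ` {1..<n})"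
  by (auto simp: layer_lamPC)

lemma layer2: "n \<ge> 1 \<Longrightarrow> p \<ge> 2 \<Longrightarrow> (\<forall>i\<in>{1..<n}. c i \<ge> 1) \<Longrightarrow>
    layer n (lamPC n p c) 2 = L2 n"
proof -
  assume n: "n \<ge> 1" and p: "p \<ge> 2" and c: "\<forall>i\<in>{1..<n}. c i \<ge> 1"
  show ?thesis
  proof (rule set_eqI)
    fix x
    have A: "x \<in> layer n (lamPC n p c) 2 \<Longrightarrow> x \<in> L2 n"
      unfolding layer_lamPC[OF n] L2_alt[OF n] by auto
    have B: "x \<in> layer n (lamPC n p c) 2" if "x \<in> L2 n"
    proof -
      from that[unfolded L2_alt[OF n]] have "x = Q 2 \<or> (\<exists>i\<in>{1..<n}. x = R 1 i)" by auto
      thus ?thesis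
      proof
        assume "x = Q 2" thus ?thesis using p unfolding layer_lamPC[OF n] by auto
      next
        assume "\<exists>i\<in>{1..<n}. x = R 1 i"
        then obtain i where i: "i \<in> {1..<n}" "x = R 1 i" by auto
        hence "1 \<le> c i" using c by auto
        thus ?thesis using i unfolding layer_lamPC[OF n] by force
      qed
    qed
    show "x \<in> layer n (lamPC n p c) 2 \<longleftrightarrow> x \<in> L2 n" using A B by blast
  qed
qed

lemma card_QR: "card (insert (Q a) ((\<lambda>i. R b i) ` {1..<n})) = 1 + (n - 1)"
proof -
  have "Q a \<notin> (\<lambda>i. R b i) ` {1..<n}" using Q_R_neq by auto
  moreover have "inj_on (\<lambda>i. R b i) {1..<n}" unfolding inj_on_def by (auto simp: R_inj)
  ultimately show ?thesis by (simp add: card_image)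
qed

lemma lamPC_down: "(\<forall>i\<in>{1..<n}. c i \<le> p) \<Longrightarrow> x \<in> lamPC n p c \<Longrightarrow> y \<le> x \<Longrightarrow> y \<in> lamPC n p c"
  unfolding mem_lamPC
  apply (elim disjE exE conjE)
   apply (metis le_Q le_trans)
  by (metis atLeastLessThan_iff le_R le_trans)

lemma lamPC_pts: "n \<ge> 1 \<Longrightarrow> lamPC n p c \<subseteq> pts n"
  unfolding mem_lamPC subset_iff by (auto simp: Q_pts R_pts)

lemma Soc_lamPC:
  assumes n: "n \<ge> 1" and c: "\<forall>i\<in>{1..<n}. 2 \<le> c i \<and> c i \<le> p" and p: "3 \<le> p \<or> (\<exists>k\<in>{1..<n}. c k = p)"
  shows "Soc (lamPC n p c) \<subseteq> layer_ge n (lamPC n p c) 3"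
proof
  fix x assume x: "x \<in> Soc (lamPC n p c)"
  hence xl: "x \<in> lamPC n p c" and mx: "\<And>y. y \<in> lamPC n p c \<Longrightarrow> x \<le> y \<Longrightarrow> y = x"
    unfolding Soc_def by auto
  from xl[unfolded mem_lamPC] show "x \<in> layer_ge n (lamPC n p c) 3"
  proof (elim disjE exE conjE)
    fix a assume a: "a \<le> p" "x = Q a"
    have "a = p"
    proof (rule ccontr)
      assume "a \<noteq> p"
      hence "Q (a+1) \<in> lamPC n p c" using a by (simp add: mem_Q)
      moreover have "x \<le> Q (a+1)" using a by (simp add: Q_le_Q)
      ultimately have "Q (a+1) = Q a" using mx a by metis
      thus False by (simp add: Q_inj)
    qed
    have "3 \<le> p"
    proof (rule ccontr)
      assume "\<not> 3 \<le> p"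
      then obtain k where k: "k \<in> {1..<n}" "c k = p" using p by auto
      hence "R p k \<in> lamPC n p c" by (simp add: mem_R)
      moreover have "x \<le> R p k" using a \<open>a = p\<close> by (simp add: Q_le_R)
      ultimately have "R p k = Q p" using mx a \<open>a = p\<close> by metis
      thus False using k Q_R_neq' by auto
    qed
    thus ?thesis using a xl n \<open>a = p\<close> by (simp add: layer_ge_def deg_Q)
  next
    fix i a assume a: "1 \<le> i" "i < n" "a \<le> c i" "x = R a i"
    have "a = c i"
    proof (rule ccontr)
      assume "a \<noteq> c i"
      hence "R (a+1) i \<in> lamPC n p c" using a by (simp add: mem_R)
      moreover have "x \<le> R (a+1) i" using a by (simp add: R_le_R)
      ultimately have "R (a+1) i = R a i" using mx a by metis
      thus False using a by (simp add: R_inj)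
    qed
    hence "2 \<le> a" using c a by auto
    thus ?thesis using a xl n by (simp add: layer_ge_def deg_R)
  qed
qed


lemma V_D: "(p, c) \<in> V n m \<Longrightarrow> 2 \<le> p \<and> (\<forall>i\<in>{1..<n}. 2 \<le> c i \<and> c i \<le> p) \<and>
   c \<in> PiE {1..<n} (\<lambda>_. {2..p}) \<and> (3 \<le> p \<or> (\<exists>k\<in>{1..<n}. c k = p)) \<and> m = p - 2 + (\<Sum>k\<in>{1..<n}. c k - 1)"
  unfolding V_def by (auto simp: PiE_iff)

lemma forward:
  assumes n: "n \<ge> 1" and V: "(p, c) \<in> V n m"
  shows "M_partition n n m (lamPC n p c) \<and> layer n (lamPC n p c) 2 = L2 n"
proof -
  note D = V_D[OF V]
  have p: "2 \<le> p" and c: "\<forall>i\<in>{1..<n}. 2 \<le> c i \<and> c i \<le> p"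
    and pc: "3 \<le> p \<or> (\<exists>k\<in>{1..<n}. c k = p)" and m: "m = p - 2 + (\<Sum>k\<in>{1..<n}. c k - 1)"
    using D by auto
  have m0: "0 < m"
  proof (cases "3 \<le> p")
    case True thus ?thesis using m by auto
  next
    case False
    then obtain k where k: "k \<in> {1..<n}" "c k = p" using pc by auto
    hence "0 < c k - 1" using p by auto
    hence "0 < (\<Sum>k\<in>{1..<n}. c k - 1)" using k by (intro sum_pos2[of _ k]) auto
    thus ?thesis using m by auto
  qed
  have sum1: "(\<Sum>i\<in>{1..<n}. c i + 1) = (\<Sum>i\<in>{1..<n}. c i - 1) + 2 * (n - 1)"
  proof -
    have "(\<Sum>i\<in>{1..<n}. c i + 1) = (\<Sum>i\<in>{1..<n}. (c i - 1) + 2)"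
    proof (rule sum.cong[OF refl])
      fix i assume "i \<in> {1..<n}"
      hence "2 \<le> c i" using c by blast
      thus "c i + 1 = (c i - 1) + 2" by arith
    qed
    also have "\<dots> = (\<Sum>i\<in>{1..<n}. c i - 1) + (\<Sum>i\<in>{1..<n}. 2)"
      by (rule sum.distrib)
    also have "(\<Sum>i\<in>{1..<n}. (2::nat)) = 2 * (n - 1)" by simp
    finally show ?thesis .
  qed
  have card: "card (lamPC n p c) = 1 + n + n + m"
    unfolding card_lamPC sum1 m using p n by simp
  have pset: "lamPC n p c \<in> Pset n (1 + n + n + m)"
    unfolding Pset_def using lamPC_pts[OF n] card lamPC_down[of n c p] c
    by (auto simp: lamPC_def finite_JJ)
  have soc: "Soc (lamPC n p c) \<subseteq> layer_ge n (lamPC n p c) 3"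
    using Soc_lamPC[OF n c pc] .
  have h1: "hfun n (lamPC n p c) 1 = n"
    unfolding hfun_def using layer1[OF n] p card_QR n by simp
  have "\<forall>i\<in>{1..<n}. c i \<ge> 1" using c by auto
  hence l2: "layer n (lamPC n p c) 2 = L2 n" using layer2[OF n p] by blast
  have h2: "hfun n (lamPC n p c) 2 = n"
    unfolding hfun_def l2 L2_alt[OF n] using card_QR n by simp
  have h3: "card (layer_ge n (lamPC n p c) 3) = m"
    using card_layer3[OF n] m by simp
  show ?thesis unfolding M_partition_def using n m0 pset soc h1 h2 h3 l2 by auto
qed


lemma deg_ee: "j < n \<Longrightarrow> k < n \<Longrightarrow> deg n (\<lambda>t. ebasis j t + ebasis k t) = 2"
  unfolding deg_def ebasis_def by (simp add: sum.distrib)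

lemma M_D:
  assumes "M_partition n n m lam"
  shows "finite lam" "lam \<subseteq> pts n" "\<And>x y. x \<in> lam \<Longrightarrow> y \<in> pts n \<Longrightarrow> y \<le> x \<Longrightarrow> y \<in> lam"
    "Soc lam \<subseteq> layer_ge n lam 3" "card (layer_ge n lam 3) = m"
  using assms unfolding M_partition_def Pset_def by auto

lemma shape:
  assumes n: "n \<ge> 1" and M: "M_partition n n m lam" and L: "layer n lam 2 = L2 n" and x: "x \<in> lam"
  shows "(\<exists>a. x = Q a) \<or> (\<exists>a i. 1 \<le> i \<and> i < n \<and> x = R a i)"
proof -
  note MD = M_D[OF M]
  have xp: "x \<in> pts n" using MD(2) x by auto
  have bad: False if y: "y \<in> pts n" "y \<le> x" "deg n y = 2" "y 0 = 0" for y
  proof -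
    have "y \<in> lam" using MD(3)[OF x y(1,2)] .
    hence "y \<in> L2 n" using L y(3) unfolding layer_def by auto
    hence "y = Q 2 \<or> (\<exists>i. y = R 1 i)" unfolding L2_alt[OF n] by auto
    thus False using y(4) by auto
  qed
  have lt: "j < n" if "x j \<noteq> 0" for j using xp that unfolding pts_def by (metis (mono_tags) mem_Collect_eq not_le)
  have A: "x j \<le> 1" if j: "1 \<le> j" for j
  proof (rule ccontr)
    assume "\<not> x j \<le> 1"
    hence xj: "x j \<ge> 2" by simp
    let ?y = "\<lambda>t. ebasis j t + ebasis j t"
    have jn: "j < n" using lt xj by auto
    have "?y \<in> pts n" using jn unfolding pts_def ebasis_def by auto
    moreover have "?y \<le> x" using xj unfolding le_fun_def ebasis_def by auto
    moreover have "deg n ?y = 2" using deg_ee[OF jn jn] .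
    moreover have "?y 0 = 0" using j unfolding ebasis_def by auto
    ultimately show False by (rule bad)
  qed
  have B: "j = k" if jk: "1 \<le> j" "1 \<le> k" "x j \<noteq> 0" "x k \<noteq> 0" for j k
  proof (rule ccontr)
    assume ne: "j \<noteq> k"
    let ?y = "\<lambda>t. ebasis j t + ebasis k t"
    have jn: "j < n" "k < n" using lt jk by auto
    have "?y \<in> pts n" using jn unfolding pts_def ebasis_def by auto
    moreover have "?y \<le> x" using jk ne unfolding le_fun_def ebasis_def by auto
    moreover have "deg n ?y = 2" using deg_ee[OF jn] .
    moreover have "?y 0 = 0" using jk unfolding ebasis_def by auto
    ultimately show False by (rule bad)
  qed
  show ?thesis
  proof (cases "\<exists>i. 1 \<le> i \<and> x i \<noteq> 0")
    case True
    then obtain i where i: "1 \<le> i" "x i \<noteq> 0" by auto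
    have "x = R (x 0) i"
    proof
      fix t show "x t = R (x 0) i t"
      proof (cases "t = 0")
        case False
        hence t1: "1 \<le> t" by simp
        show ?thesis
        proof (cases "t = i")
          case True thus ?thesis using A[OF i(1)] i False by (simp add: R_nz)
        next
          case ne: False
          hence "x t = 0" using B[OF t1 i(1)] i(2) by auto
          thus ?thesis using False ne by (simp add: R_nz)
        qed
      qed simp
    qed
    thus ?thesis using i lt by blast
  next
    case False
    have "x = Q (x 0)"
    proof
      fix t show "x t = Q (x 0) t" using False by (cases "t = 0") (auto simp: Q_nz)
    qed
    thus ?thesis by blast
  qed
qed


lemma inj_Q: "inj Q" unfolding inj_def by (simp add: Q_inj)
lemma inj_R: "1 \<le> i \<Longrightarrow> inj (\<lambda>a. R a i)" unfolding inj_def by (simp add: R_inj)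

lemma backward:
  assumes n: "n \<ge> 1" and M: "M_partition n n m lam" and L: "layer n lam 2 = L2 n"
  shows "\<exists>pc\<in>V n m. lam = (case pc of (p, c) \<Rightarrow> lamPC n p c)"
proof -
  note MD = M_D[OF M]
  have L2sub: "L2 n \<subseteq> lam" using L unfolding layer_def by auto
  have Q2: "Q 2 \<in> lam" using L2sub unfolding L2_alt[OF n] by auto
  have R1: "R 1 i \<in> lam" if "i \<in> {1..<n}" for i using L2sub that unfolding L2_alt[OF n] by auto
  define SQ where "SQ = {a. Q a \<in> lam}"
  have finQ: "finite SQ" unfolding SQ_def
    using finite_vimageI[OF MD(1) inj_Q] by (simp add: vimage_def)
  define p where "p = Max SQ"
  have p2: "2 \<le> p" unfolding p_def using finQ Q2 by (intro Max_ge) (auto simp: SQ_def)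
  have Qp: "Q p \<in> lam" unfolding p_def using finQ Q2 Max_in[of SQ] by (auto simp: SQ_def)
  have leP: "a \<le> p" if "Q a \<in> lam" for a unfolding p_def using finQ that by (intro Max_ge) (auto simp: SQ_def)
  define c where "c = (\<lambda>i. if i \<in> {1..<n} then Max {a. R a i \<in> lam} else undefined)"
  have finR: "finite {a. R a i \<in> lam}" if "i \<in> {1..<n}" for i
    using finite_vimageI[OF MD(1) inj_R[of i]] that by (simp add: vimage_def)
  have Rc: "R (c i) i \<in> lam" if i: "i \<in> {1..<n}" for i
    using finR[OF i] R1[OF i] Max_in[of "{a. R a i \<in> lam}"] i by (auto simp: c_def)
  have leC: "a \<le> c i" if i: "i \<in> {1..<n}" and "R a i \<in> lam" for i a
    using finR[OF i] that by (auto simp: c_def intro!: Max_ge)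
  have downQ: "Q a \<in> lam" if "a \<le> p" for a
    using MD(3)[OF Qp Q_pts[OF n]] that by (simp add: Q_le_Q)
  have downR: "R a i \<in> lam" if i: "i \<in> {1..<n}" and "a \<le> c i" for a i
    using MD(3)[OF Rc[OF i] R_pts] that R_le_R by auto
  have cp: "c i \<le> p" if i: "i \<in> {1..<n}" for i
    using MD(3)[OF Rc[OF i] Q_pts[OF n] Q_le_R] leP by auto
  have eq: "lam = lamPC n p c"
  proof (rule set_eqI)
    fix x
    show "x \<in> lam \<longleftrightarrow> x \<in> lamPC n p c"
    proof
      assume x: "x \<in> lam"
      from shape[OF n M L x] show "x \<in> lamPC n p c"
      proof (elim disjE exE conjE)
        fix a assume "x = Q a" thus ?thesis using leP x by (simp add: mem_Q)
      next
        fix a i assume "1 \<le> i" "i < n" "x = R a i" thus ?thesis using leC x by (simp add: mem_R)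
      qed
    next
      assume "x \<in> lamPC n p c"
      thus "x \<in> lam" unfolding mem_lamPC using downQ downR by auto
    qed
  qed
  have c2: "2 \<le> c i" if i: "i \<in> {1..<n}" for i
  proof -
    have "R (c i) i \<in> Soc lam"
    proof -
      have "y = R (c i) i" if y: "y \<in> lamPC n p c" "R (c i) i \<le> y" for y
        using y(1)[unfolded mem_lamPC]
      proof (elim disjE exE conjE)
        fix a assume "y = Q a" thus ?thesis using R_le_Q[of i] i y(2) by auto
      next
        fix k a assume k: "1 \<le> k" "k < n" "a \<le> c k" "y = R a k"
        thus ?thesis using R_le_R'[of i k "c i" a] i y(2) by auto
      qed
      thus ?thesis unfolding Soc_def using Rc[OF i] eq by auto
    qed
    hence "R (c i) i \<in> layer_ge n lam 3" using MD(4) by auto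
    thus ?thesis using i by (auto simp: layer_ge_def deg_R)
  qed
  have pc: "3 \<le> p \<or> (\<exists>k\<in>{1..<n}. c k = p)"
  proof (rule ccontr)
    assume neg: "\<not> (3 \<le> p \<or> (\<exists>k\<in>{1..<n}. c k = p))"
    have "Q p \<in> Soc lam"
    proof -
      have "y = Q p" if y: "y \<in> lamPC n p c" "Q p \<le> y" for y
        using y(1)[unfolded mem_lamPC]
      proof (elim disjE exE conjE)
        fix a assume "a \<le> p" "y = Q a" thus ?thesis using y(2) by (simp add: Q_le_Q)
      next
        fix k a assume k: "1 \<le> k" "k < n" "a \<le> c k" "y = R a k"
        hence "p \<le> a" using Q_le_R' y(2) by blast
        moreover have "c k \<le> p" "c k \<noteq> p" using cp neg k by auto
        ultimately show ?thesis using k by simp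
      qed
      thus ?thesis unfolding Soc_def using Qp eq by auto
    qed
    hence "Q p \<in> layer_ge n lam 3" using MD(4) by auto
    hence "3 \<le> p" using n by (auto simp: layer_ge_def deg_Q)
    thus False using neg by simp
  qed
  have m: "m = p - 2 + (\<Sum>k\<in>{1..<n}. c k - 1)"
    using MD(5) card_layer3[OF n, of p c] eq by simp
  have "c \<in> PiE {1..<n} (\<lambda>_. {2..p})"
    using c2 cp by (auto simp: PiE_iff c_def extensional_def)
  hence "(p, c) \<in> V n m" unfolding V_def using p2 pc m by auto
  thus ?thesis using eq by auto
qed


lemma inj_V: "inj_on (\<lambda>(p, c). lamPC n p c) (V n m)"
proof (rule inj_onI, clarify)
  fix p c p' c'
  assume V: "(p, c) \<in> V n m" "(p', c') \<in> V n m" and e: "lamPC n p c = lamPC n p' c'"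
  have "Q p \<in> lamPC n p c" "Q p' \<in> lamPC n p' c'" by (simp_all add: mem_Q)
  hence "Q p \<in> lamPC n p' c'" "Q p' \<in> lamPC n p c" using e by simp_all
  hence pp: "p = p'" by (simp add: mem_Q)
  have "c i = c' i" if i: "i \<in> {1..<n}" for i
  proof -
    have "R (c i) i \<in> lamPC n p c" "R (c' i) i \<in> lamPC n p' c'"
      using i by (simp_all add: mem_R)
    hence "R (c i) i \<in> lamPC n p' c'" "R (c' i) i \<in> lamPC n p c" using e by simp_all
    thus ?thesis using i by (simp add: mem_R)
  qed
  moreover have "c \<in> extensional {1..<n}" "c' \<in> extensional {1..<n}"
    using V by (auto simp: V_def PiE_def)
  ultimately have "c = c'" by (rule extensionalityI[rotated 2])
  thus "p = p' \<and> c = c'" using pp by simp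
qed

lemma delta_card: "n \<ge> 1 \<Longrightarrow> delta n m = card (V n m)"
proof -
  assume n: "n \<ge> 1"
  have "{lam. M_partition n n m lam \<and> layer n lam 2 = {(\<lambda>j. ebasis 0 j + ebasis i j) | i. i < n}}
        = (\<lambda>(p, c). lamPC n p c) ` V n m"
  proof (rule set_eqI)
    fix lam
    show "lam \<in> {lam. M_partition n n m lam \<and> layer n lam 2 = {(\<lambda>j. ebasis 0 j + ebasis i j) | i. i < n}}
        \<longleftrightarrow> lam \<in> (\<lambda>(p, c). lamPC n p c) ` V n m"
      unfolding L2_def[symmetric] using backward[OF n] forward[OF n] by fastforce
  qed
  thus ?thesis unfolding delta_def by (simp add: card_image[OF inj_V])
qed


lemma geo_div: "(1 - fps_X ^ (i + 1)) / (1 - fps_X) = (\<Sum>j<i+1. fps_X ^ j :: rat fps)"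
proof -
  have ne: "(1 - fps_X :: rat fps) \<noteq> 0"
  proof
    assume "(1 - fps_X :: rat fps) = 0"
    hence "fps_nth (1 - fps_X :: rat fps) 0 = 0" by simp
    thus False by simp
  qed
  have "(1 - fps_X ^ (i + 1) :: rat fps) = (1 - fps_X) * (\<Sum>j<i+1. fps_X ^ j)"
    by (rule one_diff_power_eq)
  thus ?thesis using ne by simp
qed

lemma shiftsum: "(\<Sum>c\<in>{2..i+2}. fps_X ^ (c - 1) :: rat fps) = fps_X * (\<Sum>j<i+1. fps_X ^ j)"
proof (induction i)
  case 0 thus ?case by simp
next
  case (Suc i)
  have "{2..Suc i + 2} = insert (i + 3) {2..i+2}" by auto
  hence "(\<Sum>c\<in>{2..Suc i+2}. fps_X ^ (c - 1) :: rat fps) = fps_X ^ (i + 2) + (\<Sum>c\<in>{2..i+2}. fps_X ^ (c - 1))"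
    by simp
  also have "\<dots> = fps_X * (\<Sum>j<Suc i+1. fps_X ^ j)"
    using Suc by (simp add: algebra_simps)
  finally show ?case .
qed

definition sg :: "nat \<Rightarrow> (nat \<Rightarrow> nat) \<Rightarrow> nat" where
  "sg n c = (\<Sum>k\<in>{1..<n}. c k - 1)"

lemma term_eq:
  assumes n: "n \<ge> 2"
  shows "(fps_X ^ ((i + 1) + n - 2) * ((1 - fps_X ^ (i + 1)) / (1 - fps_X)) ^ (n - 1) :: rat fps)
     = (\<Sum>g\<in>PiE {1..<n} (\<lambda>_. {2..i+2}). fps_X ^ (i + sg n g))"
proof -
  have e1: "(i + 1) + n - 2 = i + (n - 1)" using n by simp
  have "(fps_X ^ ((i + 1) + n - 2) * ((1 - fps_X ^ (i + 1)) / (1 - fps_X)) ^ (n - 1) :: rat fps)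
     = fps_X ^ i * (fps_X * (\<Sum>j<i+1. fps_X ^ j)) ^ (n - 1)"
    unfolding e1 geo_div by (simp add: power_add power_mult_distrib)
  also have "(fps_X * (\<Sum>j<i+1. fps_X ^ j) :: rat fps) ^ (n - 1)
      = (\<Prod>k\<in>{1..<n}. \<Sum>c\<in>{2..i+2}. fps_X ^ (c - 1))"
    by (simp only: shiftsum prod_constant card_atLeastLessThan)
  also have "\<dots> = (\<Sum>g\<in>PiE {1..<n} (\<lambda>_. {2..i+2}). \<Prod>k\<in>{1..<n}. fps_X ^ (g k - 1))"
    by (rule prod_sum_PiE) auto
  also have "\<dots> = (\<Sum>g\<in>PiE {1..<n} (\<lambda>_. {2..i+2}). fps_X ^ sg n g)"
    unfolding sg_def by (simp add: power_sum)
  finally show ?thesis by (simp add: sum_distrib_left power_add)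
qed

lemma term_nth:
  assumes n: "n \<ge> 2"
  shows "fps_nth (fps_X ^ ((i + 1) + n - 2) * ((1 - fps_X ^ (i + 1)) / (1 - fps_X)) ^ (n - 1) :: rat fps) k
     = of_nat (card {g\<in>PiE {1..<n} (\<lambda>_. {2..i+2}). i + sg n g = k})"
proof -
  have fin: "finite (PiE {1..<n} (\<lambda>_. {2..i+2}))" by (rule finite_PiE) auto
  have "fps_nth (fps_X ^ ((i + 1) + n - 2) * ((1 - fps_X ^ (i + 1)) / (1 - fps_X)) ^ (n - 1) :: rat fps) k
      = (\<Sum>g\<in>PiE {1..<n} (\<lambda>_. {2..i+2}). if k = i + sg n g then 1 else 0)"
    unfolding term_eq[OF n] fps_sum_nth by simp
  also have "\<dots> = (\<Sum>g\<in>{g\<in>PiE {1..<n} (\<lambda>_. {2..i+2}). i + sg n g = k}. 1)"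
    using fin by (subst sum.inter_filter) (auto intro!: sum.cong)
  finally show ?thesis by simp
qed


lemma V_ge2:
  assumes n: "n \<ge> 2" and N: "k < N"
  shows "card (V n k) = (\<Sum>i<N. card {g\<in>PiE {1..<n} (\<lambda>_. {2..i+2}). i + sg n g = k})"
proof -
  let ?S = "SIGMA i:{..<N}. {g\<in>PiE {1..<n} (\<lambda>_. {2..i+2}). i + sg n g = k}"
  have fin: "finite {g\<in>PiE {1..<n} (\<lambda>_. {2..i+2}). i + sg n g = k}" for i
    by (rule finite_subset[OF _ finite_PiE[of "{1..<n}" "\<lambda>_. {2..i+2}"]]) auto
  have img: "V n k = (\<lambda>(i, g). (i + 2, g)) ` ?S"
  proof (rule set_eqI)
    fix x
    show "x \<in> V n k \<longleftrightarrow> x \<in> (\<lambda>(i, g). (i + 2, g)) ` ?S"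
    proof
      assume x: "x \<in> V n k"
      obtain p c where xe: "x = (p, c)" by (cases x)
      note D = V_D[OF x[unfolded xe]]
      have "(p - 2, c) \<in> ?S" using D N unfolding sg_def by auto
      moreover have "p - 2 + 2 = p" using D by arith
      hence "x = (\<lambda>(i, g). (i + 2, g)) (p - 2, c)" using xe by simp
      ultimately show "x \<in> (\<lambda>(i, g). (i + 2, g)) ` ?S" by blast
    next
      assume "x \<in> (\<lambda>(i, g). (i + 2, g)) ` ?S"
      then obtain i g where x: "x = (i + 2, g)" and g: "g \<in> PiE {1..<n} (\<lambda>_. {2..i+2})" "i + sg n g = k"
        by auto
      have "3 \<le> i + 2 \<or> (\<exists>k\<in>{1..<n}. g k = i + 2)"
      proof (cases "i = 0")
        case True
        have "1 \<in> {1..<n}" using n by auto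
        hence "g 1 \<in> {2..i+2}" using g(1) by (auto simp: PiE_iff)
        hence "g 1 = i + 2" using True by auto
        thus ?thesis using \<open>1 \<in> {1..<n}\<close> by blast
      qed simp
      thus "x \<in> V n k" unfolding x V_def using g unfolding sg_def by auto
    qed
  qed
  have inj: "inj_on (\<lambda>(i, g). (i + 2, g)) ?S" by (auto simp: inj_on_def)
  have "card (V n k) = card ?S" unfolding img by (rule card_image[OF inj])
  also have "\<dots> = (\<Sum>i<N. card {g\<in>PiE {1..<n} (\<lambda>_. {2..i+2}). i + sg n g = k})"
    using fin by simp
  finally show ?thesis .
qed

lemma V1: "card (V 1 m) = (if 1 \<le> m then 1 else 0)"
proof -
  have "V 1 m = (if 1 \<le> m then {(m + 2, \<lambda>_. undefined)} else {})"
    unfolding V_def by auto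
  thus ?thesis by simp
qed

theorem lemma5p8:
  shows "(\<lambda>i. fps_X ^ (i + 1)) sums Phi 1 \<and>
    (\<forall>n\<ge>2. (\<lambda>i. fps_X ^ ((i + 1) + n - 2) *
        ((1 - fps_X ^ (i + 1)) / (1 - fps_X)) ^ (n - 1)) sums Phi n)"
proof
  show "(\<lambda>i. fps_X ^ (i + 1)) sums Phi 1"
    unfolding sums_def
  proof (rule tendsto_fpsI)
    fix k
    show "\<forall>\<^sub>F N in sequentially. fps_nth (\<Sum>i<N. fps_X ^ (i + 1)) k = fps_nth (Phi 1) k"
    proof (rule eventually_sequentiallyI[of k])
      fix N assume N: "k \<le> N"
      have "fps_nth (Phi 1) k = (if 1 \<le> k then 1 else 0)"
        unfolding Phi_def using delta_card[of 1 k] V1[of k] by simp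
      moreover have "fps_nth (\<Sum>i<N. fps_X ^ (i + 1) :: rat fps) k = (if 1 \<le> k then 1 else 0)"
      proof (cases k)
        case 0 thus ?thesis by (simp add: fps_sum_nth)
      next
        case (Suc j)
        hence "fps_nth (\<Sum>i<N. fps_X ^ (i + 1) :: rat fps) k = (\<Sum>i<N. if i = j then 1 else 0)"
          by (simp add: fps_sum_nth)
        also have "\<dots> = 1" using N Suc by simp
        finally show ?thesis using Suc by simp
      qed
      ultimately show "fps_nth (\<Sum>i<N. fps_X ^ (i + 1)) k = fps_nth (Phi 1) k" by simp
    qed
  qed
next
  show "\<forall>n\<ge>2. (\<lambda>i. fps_X ^ ((i + 1) + n - 2) *
        ((1 - fps_X ^ (i + 1)) / (1 - fps_X)) ^ (n - 1)) sums Phi n"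
  proof (intro allI impI)
    fix n :: nat assume n: "2 \<le> n"
    show "(\<lambda>i. fps_X ^ ((i + 1) + n - 2) *
        ((1 - fps_X ^ (i + 1)) / (1 - fps_X)) ^ (n - 1)) sums Phi n"
      unfolding sums_def
    proof (rule tendsto_fpsI)
      fix k
      show "\<forall>\<^sub>F N in sequentially. fps_nth (\<Sum>i<N. fps_X ^ ((i + 1) + n - 2) *
        ((1 - fps_X ^ (i + 1)) / (1 - fps_X)) ^ (n - 1)) k = fps_nth (Phi n) k"
      proof (rule eventually_sequentiallyI[of "k + 1"])
        fix N assume N: "k + 1 \<le> N"
        have "fps_nth (\<Sum>i<N. fps_X ^ ((i + 1) + n - 2) *
             ((1 - fps_X ^ (i + 1)) / (1 - fps_X)) ^ (n - 1) :: rat fps) k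
           = (\<Sum>i<N. of_nat (card {g\<in>PiE {1..<n} (\<lambda>_. {2..i+2}). i + sg n g = k}))"
          unfolding fps_sum_nth using term_nth[OF n] by simp
        also have "\<dots> = of_nat (card (V n k))"
          using V_ge2[OF n, of k N] N by simp
        also have "\<dots> = fps_nth (Phi n) k"
          unfolding Phi_def using delta_card[of n k] n by simp
        finally show "fps_nth (\<Sum>i<N. fps_X ^ ((i + 1) + n - 2) *
             ((1 - fps_X ^ (i + 1)) / (1 - fps_X)) ^ (n - 1)) k = fps_nth (Phi n) k" .
      qed
    qed
  qed
qed

end
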